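(* Let $n\ge 1$ and let $B=\prod_{i=1}^n[a_i,b_i]\subseteq\mathbb{R}^n$ (with $a_i<b_i$) be an $n$-dimensional box, and let $V$ be its set of $2^n$ vertices. Let $0\le k<n$. Then there exists a (non-unique) subset $U\subseteq V$ with $|U|=\sum_{i=0}^k\binom{n}{i}$ such that $\deg(U\to v)=k$ for every $v\in V\setminus U$.
   Context: All polynomials are real polynomials in $n$ variables. For a set $S\subseteq\mathbb{R}^n$ and a point $t\in\mathbb{R}^n$, $\deg(S\to t)$ denotes the maximal integer $k$ such that every polynomial of degree at most $k$ which vanishes on every point of $S$ also vanishes at $t$ (equivalently, the values of any polynomial of degree at most $k$ on $S$ determine its value at $t$). *)

theory Defs
  imports "HOL-Analysis.Analysis"
begin

definition monoms :: "nat \<Rightarrow> ('n::finite \<Rightarrow> nat) set" where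
  "monoms k = {\<alpha>. (\<Sum>i\<in>UNIV. \<alpha> i) \<le> k}"

definition poly_deg_le :: "nat \<Rightarrow> (real^'n::finite \<Rightarrow> real) \<Rightarrow> bool" where
  "poly_deg_le k p \<longleftrightarrow> (\<exists>c :: ('n \<Rightarrow> nat) \<Rightarrow> real.
      p = (\<lambda>x. \<Sum>\<alpha>\<in>monoms k. c \<alpha> * (\<Prod>i\<in>UNIV. (x $ i) ^ \<alpha> i)))"

definition determines :: "(real^'n::finite) set \<Rightarrow> real^'n \<Rightarrow> nat \<Rightarrow> bool" where
  "determines S t k \<longleftrightarrow>
     (\<forall>p. poly_deg_le k p \<longrightarrow> (\<forall>s\<in>S. p s = 0) \<longrightarrow> p t = 0)"

definition deg_to_eq :: "(real^'n::finite) set \<Rightarrow> real^'n \<Rightarrow> nat \<Rightarrow> bool" where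
  "deg_to_eq S t k \<longleftrightarrow> determines S t k \<and> (\<forall>m. determines S t m \<longrightarrow> m \<le> k)"

definition box_vertices :: "real^'n::finite \<Rightarrow> real^'n \<Rightarrow> (real^'n) set" where
  "box_vertices a b = {x. \<forall>i. x $ i = a $ i \<or> x $ i = b $ i}"

end

theory Submission
  imports Defs
begin

definition vx :: "real^'n::finite \<Rightarrow> real^'n \<Rightarrow> 'n set \<Rightarrow> real^'n" where
  "vx a b W = (\<chi> i. if i \<in> W then b $ i else a $ i)"

lemma alt_sum_zero:
  fixes g :: "'a set \<Rightarrow> real"
  assumes "finite R" "j \<in> R" "\<And>S. g S = g (S - {j})"
  shows "(\<Sum>S\<in>Pow R. (-1) ^ card (R - S) * g S) = 0"
proof -
  define R' where "R' = R - {j}"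
  have R: "R = insert j R'" "j \<notin> R'" "finite R'" using assms R'_def by auto
  have disj: "Pow R' \<inter> insert j ` Pow R' = {}" using R by auto
  have inj: "inj_on (insert j) (Pow R')" using R by (auto simp: inj_on_def)
  have c1: "card (insert j R' - S) = Suc (card (R' - S))" if "S \<subseteq> R'" for S
  proof -
    have "insert j R' - S = insert j (R' - S)" using that R by auto
    then show ?thesis using R by simp
  qed
  have c2: "card (insert j R' - insert j S) = card (R' - S)" for S
  proof -
    have "insert j R' - insert j S = R' - S" using R by auto
    then show ?thesis by simp
  qed
  have g: "g (insert j S) = g S" if "S \<subseteq> R'" for S
  proof -
    have "g (insert j S) = g (insert j S - {j})" by (rule assms(3))
    also have "insert j S - {j} = S" using that R by auto
    finally show ?thesis .
  qed
  have "(\<Sum>S\<in>Pow R. (-1) ^ card (R - S) * g S)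
      = (\<Sum>S\<in>Pow R'. (-1) ^ card (R - S) * g S) + (\<Sum>S\<in>insert j ` Pow R'. (-1) ^ card (R - S) * g S)"
    unfolding R(1) Pow_insert by (rule sum.union_disjoint) (use R disj in auto)
  also have "(\<Sum>S\<in>insert j ` Pow R'. (-1) ^ card (R - S) * g S) = (\<Sum>S\<in>Pow R'. (-1) ^ card (R - insert j S) * g (insert j S))"
    by (rule sum.reindex[OF inj, unfolded comp_def])
  also have "\<dots> = (\<Sum>S\<in>Pow R'. - ((-1) ^ card (R - S) * g S))"
  proof (rule sum.cong)
    fix S assume "S \<in> Pow R'"
    then have S: "S \<subseteq> R'" by auto
    have e1: "R - insert j S = R' - S" using R S by auto
    have e2: "R - S = insert j (R' - S)" using R S by auto
    have "card (R - S) = Suc (card (R' - S))" unfolding e2 using R by simp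
    then show "(-1) ^ card (R - insert j S) * g (insert j S) = - ((-1) ^ card (R - S) * g S)"
      unfolding e1 g[OF S] by simp
  qed simp
  finally show ?thesis by (simp add: sum_negf)
qed

lemma exists_zero_exp:
  fixes \<alpha> :: "'n::finite \<Rightarrow> nat"
  assumes "\<alpha> \<in> monoms k" "card R = k + 1"
  shows "\<exists>j\<in>R. \<alpha> j = 0"
proof (rule ccontr)
  assume "\<not> ?thesis"
  then have "\<forall>j\<in>R. 1 \<le> \<alpha> j" by auto
  then have "(\<Sum>j\<in>R. (1::nat)) \<le> (\<Sum>j\<in>R. \<alpha> j)" by (intro sum_mono) auto
  also have "\<dots> \<le> (\<Sum>j\<in>UNIV. \<alpha> j)" by (rule sum_mono2) auto
  also have "\<dots> \<le> k" using assms(1) by (simp add: monoms_def)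
  finally show False using assms(2) by simp
qed

lemma poly_alt:
  fixes p :: "real^'n::finite \<Rightarrow> real"
  assumes "poly_deg_le k p" "card R = k + 1"
  shows "(\<Sum>S\<in>Pow R. (-1) ^ card (R - S) * p (vx a b (B \<union> S))) = 0"
proof -
  obtain c where p: "p = (\<lambda>x. \<Sum>\<alpha>\<in>monoms k. c \<alpha> * (\<Prod>i\<in>UNIV. (x $ i) ^ \<alpha> i))"
    using assms(1) unfolding poly_deg_le_def by blast
  have fin: "finite R" by simp
  have inner: "(\<Sum>S\<in>Pow R. (-1) ^ card (R - S) * (\<Prod>i\<in>UNIV. (vx a b (B \<union> S) $ i) ^ \<alpha> i)) = 0"
    if al: "\<alpha> \<in> monoms k" for \<alpha>
  proof -
    obtain j where j: "j \<in> R" "\<alpha> j = 0" using exists_zero_exp[OF al assms(2)] by blast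
    show ?thesis
    proof (rule alt_sum_zero[OF fin j(1)])
      fix S
      show "(\<Prod>i\<in>UNIV. (vx a b (B \<union> S) $ i) ^ \<alpha> i) = (\<Prod>i\<in>UNIV. (vx a b (B \<union> (S - {j})) $ i) ^ \<alpha> i)"
        by (rule prod.cong) (auto simp: vx_def j(2))
    qed
  qed
  have "(\<Sum>S\<in>Pow R. (-1) ^ card (R - S) * p (vx a b (B \<union> S)))
     = (\<Sum>S\<in>Pow R. \<Sum>\<alpha>\<in>monoms k. c \<alpha> * ((-1) ^ card (R - S) * (\<Prod>i\<in>UNIV. (vx a b (B \<union> S) $ i) ^ \<alpha> i)))"
    unfolding p by (simp add: sum_distrib_left mult.left_commute)
  also have "\<dots> = (\<Sum>\<alpha>\<in>monoms k. c \<alpha> * (\<Sum>S\<in>Pow R. (-1) ^ card (R - S) * (\<Prod>i\<in>UNIV. (vx a b (B \<union> S) $ i) ^ \<alpha> i)))"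
    by (subst sum.swap) (simp add: sum_distrib_left)
  also have "\<dots> = 0" using inner by simp
  finally show ?thesis .
qed

lemma vanish_all:
  fixes p :: "real^'n::finite \<Rightarrow> real"
  assumes "poly_deg_le k p" "\<And>W. card W \<le> k \<Longrightarrow> p (vx a b W) = 0"
  shows "p (vx a b T) = 0"
proof (induction "card T" arbitrary: T rule: less_induct)
  case less
  show ?case
  proof (cases "card T \<le> k")
    case True then show ?thesis using assms(2) by blast
  next
    case False
    then obtain R where R: "R \<subseteq> T" "card R = k + 1" "finite R"
      using obtain_subset_with_card_n[of "k+1" T] by auto
    define B where "B = T - R"
    have BR: "B \<union> R = T" using R B_def by auto
    have z: "(\<Sum>S\<in>Pow R. (-1) ^ card (R - S) * p (vx a b (B \<union> S))) = 0"
      by (rule poly_alt[OF assms(1) R(2)])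
    have rest: "(\<Sum>S\<in>Pow R - {R}. (-1) ^ card (R - S) * p (vx a b (B \<union> S))) = 0"
    proof (rule sum.neutral, rule ballI)
      fix S assume S: "S \<in> Pow R - {R}"
      then have "B \<union> S \<subset> T" using R B_def by auto
      then have "card (B \<union> S) < card T" by (simp add: psubset_card_mono)
      then have "p (vx a b (B \<union> S)) = 0" using less by blast
      then show "(-1) ^ card (R - S) * p (vx a b (B \<union> S)) = 0" by simp
    qed
    have "(\<Sum>S\<in>Pow R. (-1) ^ card (R - S) * p (vx a b (B \<union> S)))
       = (-1) ^ card (R - R) * p (vx a b (B \<union> R)) + (\<Sum>S\<in>Pow R - {R}. (-1) ^ card (R - S) * p (vx a b (B \<union> S)))"
      by (rule sum.remove) auto
    then show ?thesis using z rest BR by simp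
  qed
qed

lemma finite_monoms: "finite (monoms m :: ('n::finite \<Rightarrow> nat) set)"
proof -
  have "monoms m \<subseteq> (\<Pi>\<^sub>E i\<in>(UNIV::'n set). {0..m})"
  proof
    fix \<alpha> :: "'n \<Rightarrow> nat" assume "\<alpha> \<in> monoms m"
    then have s: "(\<Sum>i\<in>UNIV. \<alpha> i) \<le> m" by (simp add: monoms_def)
    have "\<alpha> i \<le> m" for i using member_le_sum[of i UNIV \<alpha>] s by simp
    then show "\<alpha> \<in> (\<Pi>\<^sub>E i\<in>(UNIV::'n set). {0..m})" by auto
  qed
  moreover have "finite (\<Pi>\<^sub>E i\<in>(UNIV::'n set). {0..m})" by (rule finite_PiE) auto
  ultimately show ?thesis by (rule finite_subset)
qed

definition ind :: "'n set \<Rightarrow> 'n \<Rightarrow> nat" where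
  "ind S = (\<lambda>i. if i \<in> S then 1 else 0)"

lemma prod_poly:
  fixes a :: "real^'n::finite"
  assumes "card R \<le> m"
  shows "poly_deg_le m (\<lambda>x. \<Prod>i\<in>R. x $ i - a $ i)"
proof -
  define c where "c \<alpha> = (if \<alpha> \<in> ind ` Pow R then (\<Prod>i\<in>R - {i. \<alpha> i \<noteq> 0}. - a $ i) else 0)" for \<alpha>
  have inj: "inj_on ind (Pow R)"
  proof (rule inj_onI)
    fix S S' assume "ind S = ind S'"
    then have "\<forall>i. ind S i = ind S' i" by simp
    then show "S = S'" unfolding ind_def by (metis one_neq_zero subsetI subset_antisym)
  qed
  have sub: "ind ` Pow R \<subseteq> monoms m"
  proof
    fix \<alpha> assume "\<alpha> \<in> ind ` Pow R"
    then obtain S where S: "S \<subseteq> R" "\<alpha> = ind S" by auto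
    have "(\<Sum>i\<in>UNIV. ind S i) = card S" unfolding ind_def
      by (simp add: sum.If_cases)
    also have "\<dots> \<le> card R" using S by (simp add: card_mono)
    finally show "\<alpha> \<in> monoms m" using S assms by (simp add: monoms_def)
  qed
  have mono: "(\<Prod>i\<in>UNIV. (x $ i) ^ ind S i) = (\<Prod>i\<in>S. x $ i)" for x :: "real^'n" and S
  proof -
    have "(\<Prod>i\<in>UNIV. (x $ i) ^ ind S i) = (\<Prod>i\<in>UNIV. if i \<in> S then x $ i else 1)"
      by (rule prod.cong) (auto simp: ind_def)
    also have "\<dots> = (\<Prod>i\<in>UNIV \<inter> S. x $ i)" by (rule prod.inter_restrict[symmetric]) simp
    finally show ?thesis by simp
  qed
  have cS: "c (ind S) = (\<Prod>i\<in>R - S. - a $ i)" if "S \<subseteq> R" for S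
  proof -
    have "{i. ind S i \<noteq> 0} = S" by (auto simp: ind_def)
    then show ?thesis using that by (auto simp: c_def)
  qed
  have "(\<lambda>x. \<Prod>i\<in>R. x $ i - a $ i) = (\<lambda>x. \<Sum>\<alpha>\<in>monoms m. c \<alpha> * (\<Prod>i\<in>UNIV. (x $ i) ^ \<alpha> i))"
  proof
    fix x :: "real^'n"
    have "(\<Prod>i\<in>R. x $ i - a $ i) = (\<Prod>i\<in>R. x $ i + (- a $ i))" by simp
    also have "\<dots> = (\<Sum>S\<in>Pow R. (\<Prod>i\<in>S. x $ i) * (\<Prod>i\<in>R - S. - a $ i))"
      by (rule prod_add) simp
    also have "\<dots> = (\<Sum>S\<in>Pow R. c (ind S) * (\<Prod>i\<in>UNIV. (x $ i) ^ ind S i))"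
      by (rule sum.cong) (auto simp: cS mono)
    also have "\<dots> = (\<Sum>\<alpha>\<in>ind ` Pow R. c \<alpha> * (\<Prod>i\<in>UNIV. (x $ i) ^ \<alpha> i))"
      by (rule sum.reindex[OF inj, unfolded comp_def, symmetric])
    also have "\<dots> = (\<Sum>\<alpha>\<in>monoms m. c \<alpha> * (\<Prod>i\<in>UNIV. (x $ i) ^ \<alpha> i))"
      by (rule sum.mono_neutral_right[OF finite_monoms sub, symmetric]) (auto simp: c_def)
    finally show "(\<Prod>i\<in>R. x $ i - a $ i) = (\<Sum>\<alpha>\<in>monoms m. c \<alpha> * (\<Prod>i\<in>UNIV. (x $ i) ^ \<alpha> i))" .
  qed
  then show ?thesis unfolding poly_deg_le_def by blast
qed

theorem theorem2:
  fixes a b :: "real^'n::finite" and k :: nat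
  assumes "\<forall>i. a $ i < b $ i"
    and "k < CARD('n)"
  shows "\<exists>U. U \<subseteq> box_vertices a b \<and>
             card U = (\<Sum>i=0..k. CARD('n) choose i) \<and>
             (\<forall>v \<in> box_vertices a b - U. deg_to_eq U v k)"
proof -
  have ab: "a $ i \<noteq> b $ i" for i using assms(1) by (metis less_irrefl)
  have box: "box_vertices a b = range (vx a b)"
  proof
    show "box_vertices a b \<subseteq> range (vx a b)"
    proof
      fix x assume "x \<in> box_vertices a b"
      then have x: "\<forall>i. x $ i = a $ i \<or> x $ i = b $ i" by (simp add: box_vertices_def)
      have "x = vx a b {i. x $ i = b $ i}"
        unfolding vx_def vec_eq_iff using x by auto
      then show "x \<in> range (vx a b)" by blast
    qed
    show "range (vx a b) \<subseteq> box_vertices a b"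
      by (auto simp: box_vertices_def vx_def)
  qed
  have inj: "inj (vx a b)"
  proof (rule injI)
    fix W W' assume e: "vx a b W = vx a b W'"
    show "W = W'"
    proof (rule set_eqI)
      fix i
      have "vx a b W $ i = vx a b W' $ i" using e by simp
      then show "i \<in> W \<longleftrightarrow> i \<in> W'" unfolding vx_def using ab[of i] by (auto split: if_splits)
    qed
  qed
  define U where "U = vx a b ` {W. card W \<le> k}"
  have "card U = card {W::'n set. card W \<le> k}"
    unfolding U_def by (rule card_image) (rule inj_on_subset[OF inj], simp)
  also have "{W::'n set. card W \<le> k} = (\<Union>i\<in>{0..k}. {W. W \<subseteq> UNIV \<and> card W = i})" by auto
  also have "card \<dots> = (\<Sum>i=0..k. card {W::'n set. W \<subseteq> UNIV \<and> card W = i})"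
    by (rule card_UN_disjoint) auto
  also have "\<dots> = (\<Sum>i=0..k. CARD('n) choose i)"
    by (rule sum.cong) (simp_all only: n_subsets[OF finite_class.finite_UNIV])
  finally have cardU: "card U = (\<Sum>i=0..k. CARD('n) choose i)" .
  have degs: "deg_to_eq U v k" if v: "v \<in> box_vertices a b - U" for v
  proof -
    obtain T where T: "v = vx a b T" using v box by auto
    have Tk: "\<not> card T \<le> k" using v T U_def by auto
    have d: "determines U v k"
      unfolding determines_def
    proof (intro allI impI)
      fix p :: "real^'n \<Rightarrow> real"
      assume p: "poly_deg_le k p" "\<forall>s\<in>U. p s = 0"
      show "p v = 0" unfolding T
        by (rule vanish_all[OF p(1)]) (use p(2) U_def in auto)
    qed
    have "m \<le> k" if dm: "determines U v m" for m
    proof (rule ccontr)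
      assume "\<not> m \<le> k"
      then have mk: "k + 1 \<le> m" by simp
      obtain R where R: "R \<subseteq> T" "card R = k + 1" "finite R"
        using obtain_subset_with_card_n[of "k+1" T] Tk by auto
      define p where "p = (\<lambda>x::real^'n. \<Prod>i\<in>R. x $ i - a $ i)"
      have pp: "poly_deg_le m p" unfolding p_def by (rule prod_poly) (use R mk in simp)
      have pz: "\<forall>s\<in>U. p s = 0"
      proof
        fix s assume "s \<in> U"
        then obtain W where W: "s = vx a b W" "card W \<le> k" unfolding U_def by auto
        have "\<not> R \<subseteq> W"
        proof
          assume "R \<subseteq> W"
          then have "card R \<le> card W" by (simp add: card_mono)
          then show False using R W by simp
        qed
        then obtain i where i: "i \<in> R" "i \<notin> W" by auto
        show "p s = 0" unfolding p_def W(1)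
          by (rule prod_zero) (use i R in \<open>auto simp: vx_def\<close>)
      qed
      have "p v \<noteq> 0" unfolding p_def T using R ab by (auto simp: vx_def) (metis ab)
      then show False using dm pp pz unfolding determines_def by blast
    qed
    then show ?thesis using d unfolding deg_to_eq_def by blast
  qed
  show ?thesis
    by (rule exI[of _ U]) (use box cardU degs U_def in auto)
qed

end
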